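(* Let $K\ge2$, $\sigma^2>0$, $\bm\theta\in\Theta$, and let $(\beta_K,\dots,\beta_2)$ be nonnegative batch weights summing to $1$. For every $n\in\{K,\dots,2\}$, the arm $\ell_n$ eliminated by BAE from the $n$-element candidate set satisfies $$\liminf_{T\to\infty}-\frac1T\ln\mathbb P^{\mathtt{BAE}}_{\bm\theta,T}\big(\ell_n=I^*\big)\ \ge\ w_n\Gamma_{\bm\theta,n}.$$
   Context: Sampling model: $K$ arms with unknown $\bm\theta\in\mathbb{R}^K$; potential outcomes $Y_{t,i}$ independent with $Y_{t,i}\sim\mathcal N(\theta_i,\sigma^2)$, $\sigma^2>0$; only the outcome of the chosen arm is observed. $\Theta$: set of $\bm\theta$ with unique best arm $I^*=\arg\max_i\theta_i$. Batched arm elimination (BAE) with weights $(\beta_K,\dots,\beta_2)$: candidate set $C$ initially $[K]$; $N_{t,i}$ = number of the first $t$ units assigned to arm $i$, $m_{t,i}$ = empirical mean of arm $i$'s observed outcomes among them ($0$ if none). At each $t$ assign $I_t\in\arg\min_{i\in C}N_{t-1,i}$ (ties arbitrary). For $n=K,\dots,2$, at time $T_n=(\beta_K+\dots+\beta_n)T$ (rounded to an integer; $n$ processed in decreasing order), the current candidate set $C_n$ has $n$ elements and an arm $\ell_n\in\arg\min_{i\in C_n}m_{T_n,i}$ is removed. $w_n=\sum_{k=n}^{K}\beta_k/k$. $\mathcal J_{\bm\theta,n}=\{J\subseteq[K]:|J|=n,\ I^*\in J\}$, $\Lambda_{\bm\theta,J}=\{\bm\lambda\in\mathbb R^K:\lambda_{I^*}\le\min_{i\in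 J}\lambda_i\}$, $\Gamma_{\bm\theta,n}=\min_{J\in\mathcal J_{\bm\theta,n}}\inf_{\bm\lambda\in\Lambda_{\bm\theta,J}}\sum_{i\in J}\frac{(\lambda_i-\theta_i)^2}{2\sigma^2}$. *)

theory Defs
  imports "HOL-Probability.Probability"
begin

(* Arms are 1..K, units (time steps) are 1..T.
   A history h is the list of arms assigned to units 1..length h. *)

definition cnt :: "nat list \<Rightarrow> nat \<Rightarrow> nat" where
  "cnt h i = length (filter (\<lambda>a. a = i) h)"

(* empirical mean of arm i's observed outcomes (0 if none); Y (t,i) = potential outcome *)
definition emp_mean :: "(nat \<times> nat \<Rightarrow> real) \<Rightarrow> nat list \<Rightarrow> nat \<Rightarrow> real" where
  "emp_mean Y h i = (if cnt h i = 0 then 0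
     else (\<Sum>s\<in>{s. s < length h \<and> h ! s = i}. Y (Suc s, i)) / real (cnt h i))"

definition bae_time :: "nat \<Rightarrow> (nat \<Rightarrow> real) \<Rightarrow> nat \<Rightarrow> nat \<Rightarrow> nat" where
  "bae_time K \<beta> T n = nat (round ((\<Sum>k=n..K. \<beta> k) * real T))"

definition valid_tiebreak :: "(nat list \<Rightarrow> nat set \<Rightarrow> nat) \<Rightarrow> bool" where
  "valid_tiebreak f \<longleftrightarrow> (\<forall>h S. finite S \<and> S \<noteq> {} \<longrightarrow> f h S \<in> S)"

type_synonym bae_state = "nat list \<times> nat set \<times> (nat \<Rightarrow> nat)"
  (* history, candidate set C, eliminated arms (n \<mapsto> \<ell>_n) *)

definition bae_elim :: "nat \<Rightarrow> (nat \<Rightarrow> real) \<Rightarrow> nat \<Rightarrow> (nat list \<Rightarrow> nat set \<Rightarrow> nat)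
    \<Rightarrow> (nat \<times> nat \<Rightarrow> real) \<Rightarrow> nat \<Rightarrow> bae_state \<Rightarrow> bae_state" where
  "bae_elim K \<beta> T eb Y t st =
     foldl (\<lambda>(h, C, L) n.
        if bae_time K \<beta> T n = t then
          (let l = eb h {i \<in> C. emp_mean Y h i = Min (emp_mean Y h ` C)}
           in (h, C - {l}, L(n := l)))
        else (h, C, L)) st (rev [2..<Suc K])"

(* state of BAE after the first t units (and the eliminations at time t) *)
fun bae_run :: "nat \<Rightarrow> (nat \<Rightarrow> real) \<Rightarrow> nat \<Rightarrow> (nat list \<Rightarrow> nat set \<Rightarrow> nat)
    \<Rightarrow> (nat list \<Rightarrow> nat set \<Rightarrow> nat) \<Rightarrow> (nat \<times> nat \<Rightarrow> real) \<Rightarrow> nat \<Rightarrow> bae_state" where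
  "bae_run K \<beta> T tb eb Y 0 = bae_elim K \<beta> T eb Y 0 ([], {1..K}, \<lambda>_. 0)"
| "bae_run K \<beta> T tb eb Y (Suc t) =
     (case bae_run K \<beta> T tb eb Y t of (h, C, L) \<Rightarrow>
        bae_elim K \<beta> T eb Y (Suc t)
          (h @ [tb h {i \<in> C. cnt h i = Min (cnt h ` C)}], C, L))"

definition bae_eliminated :: "nat \<Rightarrow> (nat \<Rightarrow> real) \<Rightarrow> nat \<Rightarrow> (nat list \<Rightarrow> nat set \<Rightarrow> nat)
    \<Rightarrow> (nat list \<Rightarrow> nat set \<Rightarrow> nat) \<Rightarrow> (nat \<times> nat \<Rightarrow> real) \<Rightarrow> nat \<Rightarrow> nat" where
  "bae_eliminated K \<beta> T tb eb Y n = snd (snd (bae_run K \<beta> T tb eb Y T)) n"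

definition outcome_space :: "nat \<Rightarrow> real \<Rightarrow> (nat \<Rightarrow> real) \<Rightarrow> nat \<Rightarrow> (nat \<times> nat \<Rightarrow> real) measure" where
  "outcome_space K \<sigma>2 \<theta> T =
     PiM ({1..T} \<times> {1..K}) (\<lambda>(t, i). density lborel (normal_density (\<theta> i) (sqrt \<sigma>2)))"

definition bae_prob :: "nat \<Rightarrow> real \<Rightarrow> (nat \<Rightarrow> real) \<Rightarrow> (nat \<Rightarrow> real) \<Rightarrow> (nat list \<Rightarrow> nat set \<Rightarrow> nat)
    \<Rightarrow> (nat list \<Rightarrow> nat set \<Rightarrow> nat) \<Rightarrow> nat \<Rightarrow> nat \<Rightarrow> nat \<Rightarrow> real" where
  "bae_prob K \<sigma>2 \<theta> \<beta> tb eb Istar n T =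
     measure (outcome_space K \<sigma>2 \<theta> T)
       {Y \<in> space (outcome_space K \<sigma>2 \<theta> T). bae_eliminated K \<beta> T tb eb Y n = Istar}"

definition neg_log_rate :: "real \<Rightarrow> nat \<Rightarrow> ereal" where
  "neg_log_rate P T = (if P = 0 then \<infinity> else ereal (- ln P / real T))"

definition bae_w :: "nat \<Rightarrow> (nat \<Rightarrow> real) \<Rightarrow> nat \<Rightarrow> real" where
  "bae_w K \<beta> n = (\<Sum>k=n..K. \<beta> k / real k)"

definition Gamma :: "nat \<Rightarrow> real \<Rightarrow> (nat \<Rightarrow> real) \<Rightarrow> nat \<Rightarrow> nat \<Rightarrow> real" where
  "Gamma K \<sigma>2 \<theta> Istar n =
     Min ((\<lambda>J. Inf ((\<lambda>lam. \<Sum>i\<in>J. (lam i - \<theta> i)^2 / (2 * \<sigma>2))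
                     ` {lam :: nat \<Rightarrow> real. lam Istar \<le> Min (lam ` J)}))
          ` {J. J \<subseteq> {1..K} \<and> card J = n \<and> Istar \<in> J})"

end

theory Submission
  imports Defs
begin


definition Cdet :: "nat \<Rightarrow> (nat\<Rightarrow>real) \<Rightarrow> nat \<Rightarrow> (nat\<Rightarrow>nat) \<Rightarrow> nat \<Rightarrow> nat set" where
 "Cdet K \<beta> T Lf t = {1..K} - Lf ` {k\<in>{2..K}. bae_time K \<beta> T k \<le> t}"

primrec hdet :: "nat \<Rightarrow> (nat\<Rightarrow>real) \<Rightarrow> nat \<Rightarrow> (nat list \<Rightarrow> nat set \<Rightarrow> nat) \<Rightarrow> (nat\<Rightarrow>nat) \<Rightarrow> nat \<Rightarrow> nat list" where
 "hdet K \<beta> T tb Lf 0 = []"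
| "hdet K \<beta> T tb Lf (Suc t) = hdet K \<beta> T tb Lf t @ [tb (hdet K \<beta> T tb Lf t)
     {i\<in>Cdet K \<beta> T Lf t. cnt (hdet K \<beta> T tb Lf t) i = Min (cnt (hdet K \<beta> T tb Lf t) ` Cdet K \<beta> T Lf t)}]"

lemma cnt_snoc: "cnt (xs @ [a]) i = cnt xs i + (if a = i then 1 else 0)"
  by (simp add: cnt_def)

lemma cnt_Nil[simp]: "cnt [] i = 0" by (simp add: cnt_def)

locale bae =
  fixes K :: nat and \<beta> :: "nat \<Rightarrow> real" and T :: nat and tb :: "nat list \<Rightarrow> nat set \<Rightarrow> nat"
  assumes K2: "K \<ge> 2" and beta: "\<forall>k\<in>{2..K}. \<beta> k \<ge> 0" and bsum: "(\<Sum>k=2..K. \<beta> k) = 1"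
    and tbv: "valid_tiebreak tb"
begin

abbreviation "TT k \<equiv> bae_time K \<beta> T k"

lemma time_mono: assumes "2 \<le> j" "j \<le> k" shows "TT k \<le> TT j"
proof -
  have "(\<Sum>i=k..K. \<beta> i) \<le> (\<Sum>i=j..K. \<beta> i)"
    by (rule sum_mono2) (use assms beta in auto)
  then have "(\<Sum>i=k..K. \<beta> i) * real T \<le> (\<Sum>i=j..K. \<beta> i) * real T"
    by (simp add: mult_right_mono)
  then show ?thesis unfolding bae_time_def by (intro nat_mono round_mono)
qed

lemma time_2: "TT 2 = T"
  unfolding bae_time_def using bsum by simp

lemma time_le_T: "2 \<le> k \<Longrightarrow> TT k \<le> T"
  using time_mono[of 2 k] time_2 by simp

definition good :: "(nat\<Rightarrow>nat) \<Rightarrow> bool" where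
  "good Lf \<longleftrightarrow> inj_on Lf {2..K} \<and> Lf ` {2..K} \<subseteq> {1..K} \<and> (\<forall>k. k \<notin> {2..K} \<longrightarrow> Lf k = 0)"

abbreviation "CD Lf t \<equiv> Cdet K \<beta> T Lf t"
abbreviation "HD Lf t \<equiv> hdet K \<beta> T tb Lf t"

lemma Cdet_mono: "s \<le> t \<Longrightarrow> CD Lf t \<subseteq> CD Lf s"
  unfolding Cdet_def by auto

lemma Cdet_sub: "CD Lf t \<subseteq> {1..K}" "finite (CD Lf t)"
  unfolding Cdet_def by auto

lemma card_diff_image_ge:
  assumes "A \<subseteq> {2..K}" shows "card ({1..K} - Lf ` A) \<ge> K - card A"
proof -
  have fA: "finite A" using assms finite_subset by blast
  have "card ({1..K::nat}) - card (Lf ` A) \<le> card ({1..K} - Lf ` A)"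
    by (rule diff_card_le_card_Diff) (use fA in simp)
  moreover have "card (Lf ` A) \<le> card A" by (rule card_image_le[OF fA])
  ultimately show ?thesis by simp
qed

lemma Cdet_ne: "CD Lf t \<noteq> {}"
proof -
  have sub: "{k\<in>{2..K}. TT k \<le> t} \<subseteq> {2..K}" by auto
  have "card {k\<in>{2..K}. TT k \<le> t} \<le> K - 1"
    using card_mono[OF _ sub] by simp
  moreover have "card (CD Lf t) \<ge> K - card {k\<in>{2..K}. TT k \<le> t}"
    unfolding Cdet_def by (rule card_diff_image_ge) auto
  ultimately have "card (CD Lf t) \<ge> 1" using K2 by linarith
  then show ?thesis by auto
qed

lemma tie_ne: assumes "finite C" "C \<noteq> {}" shows "{i\<in>C. f i = Min (f ` C)} \<noteq> {}"
proof -
  have "Min (f ` C) \<in> f ` C" using assms by (intro Min_in) auto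
  then obtain x where "x \<in> C" "f x = Min (f ` C)" by (metis imageE)
  then show ?thesis by blast
qed

lemma tb_in: assumes "finite C" "C \<noteq> {}" shows "tb h {i\<in>C. f i = Min (f ` C)} \<in> {i\<in>C. f i = Min (f ` C)}"
proof -
  have fin: "finite {i\<in>C. f i = Min (f ` C)}" using assms by simp
  have "\<forall>S. finite S \<and> S \<noteq> {} \<longrightarrow> tb h S \<in> S" using tbv unfolding valid_tiebreak_def by blast
  then show ?thesis using fin tie_ne[OF assms, of f] by blast
qed

lemma hdet_next_in: "tb (HD Lf t) {i\<in>CD Lf t. cnt (HD Lf t) i = Min (cnt (HD Lf t) ` CD Lf t)} \<in> CD Lf t"
  using tb_in[OF Cdet_sub(2) Cdet_ne] by blast

lemma hdet_length[simp]: "length (HD Lf t) = t"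
  by (induction t) auto

lemma hdet_set: "set (HD Lf t) \<subseteq> {1..K}"
proof (induction t)
  case (Suc t) then show ?case using hdet_next_in[of Lf t] Cdet_sub(1)[of Lf t] by (auto simp: Let_def)
qed simp

lemma balance_step: "i \<in> CD Lf t \<Longrightarrow> j \<in> CD Lf t \<Longrightarrow> (\<forall>i j. i \<in> CD Lf t \<longrightarrow> j \<in> CD Lf t \<longrightarrow> cnt (HD Lf t) i \<le> cnt (HD Lf t) j + 1)
   \<Longrightarrow> cnt (HD Lf (Suc t)) i \<le> cnt (HD Lf (Suc t)) j + 1"
proof -
  assume ij: "i \<in> CD Lf t" "j \<in> CD Lf t" and IH: "\<forall>i j. i \<in> CD Lf t \<longrightarrow> j \<in> CD Lf t \<longrightarrow> cnt (HD Lf t) i \<le> cnt (HD Lf t) j + 1"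
  define a where "a = tb (HD Lf t) {i\<in>CD Lf t. cnt (HD Lf t) i = Min (cnt (HD Lf t) ` CD Lf t)}"
  have "a \<in> {i\<in>CD Lf t. cnt (HD Lf t) i = Min (cnt (HD Lf t) ` CD Lf t)}"
    using tb_in[where C="CD Lf t" and f="cnt (HD Lf t)" and h="HD Lf t"] Cdet_sub(2) Cdet_ne unfolding a_def by blast
  then have a: "a \<in> CD Lf t" "cnt (HD Lf t) a = Min (cnt (HD Lf t) ` CD Lf t)" by simp_all
  have amin: "cnt (HD Lf t) a \<le> cnt (HD Lf t) x" if "x \<in> CD Lf t" for x
    using a(2) that Cdet_sub(2) by simp
  have H: "HD Lf (Suc t) = HD Lf t @ [a]" by (simp add: a_def)
  have "cnt (HD Lf t) i \<le> cnt (HD Lf t) j + 1" using IH ij by blast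
  then show ?thesis unfolding H cnt_snoc
    using amin[OF ij(2)] amin[OF ij(1)] by auto
qed

lemma balance: "i \<in> CD Lf t \<Longrightarrow> j \<in> CD Lf t \<Longrightarrow> cnt (HD Lf t) i \<le> cnt (HD Lf t) j + 1"
proof (induction t arbitrary: i j)
  case 0 then show ?case by simp
next
  case (Suc t)
  have ij: "i \<in> CD Lf t" "j \<in> CD Lf t" using Suc.prems Cdet_mono[of t "Suc t" Lf] by auto
  show ?case by (rule balance_step[OF ij]) (use Suc.IH in blast)
qed

lemma balance': "i \<in> CD Lf t \<Longrightarrow> j \<in> CD Lf t \<Longrightarrow> cnt (HD Lf (Suc t)) i \<le> cnt (HD Lf (Suc t)) j + 1"
  by (rule balance_step) (use balance in blast)+

lemma phase_sum:
  assumes "t1 \<le> t2" "\<forall>s. t1 \<le> s \<and> s < t2 \<longrightarrow> CD Lf s = Cc"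
  shows "(\<Sum>j\<in>Cc. cnt (HD Lf t2) j) = (\<Sum>j\<in>Cc. cnt (HD Lf t1) j) + (t2 - t1)"
  using assms
proof (induction t2)
  case 0 then show ?case by simp
next
  case (Suc t)
  show ?case
  proof (cases "t1 = Suc t")
    case True then show ?thesis by simp
  next
    case False
    then have le: "t1 \<le> t" using Suc.prems by simp
    have C: "CD Lf t = Cc" using Suc.prems le by auto
    define a where "a = tb (HD Lf t) {i\<in>CD Lf t. cnt (HD Lf t) i = Min (cnt (HD Lf t) ` CD Lf t)}"
    have a: "a \<in> Cc" using hdet_next_in[of Lf t] C unfolding a_def by simp
    have H: "HD Lf (Suc t) = HD Lf t @ [a]" by (simp add: a_def)
    have fin: "finite Cc" using Cdet_sub(2)[of Lf t] C by simp
    have "(\<Sum>j\<in>Cc. cnt (HD Lf (Suc t)) j) = (\<Sum>j\<in>Cc. cnt (HD Lf t) j + (if a = j then 1 else 0))"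
      unfolding H cnt_snoc ..
    also have "\<dots> = (\<Sum>j\<in>Cc. cnt (HD Lf t) j) + 1"
      using a fin by (simp add: sum.distrib)
    finally show ?thesis using Suc.IH[OF le] Suc.prems le by simp
  qed
qed

lemma phase_bound:
  assumes "t1 \<le> t2" "\<forall>s. t1 \<le> s \<and> s < t2 \<longrightarrow> CD Lf s = Cc" "card Cc = k" "k > 0"
    and u: "\<forall>j\<in>Cc. real (cnt (HD Lf t1) j) \<ge> u" and i: "i \<in> Cc"
  shows "real (cnt (HD Lf t2) i) \<ge> u + real (t2 - t1) / real k - 1"
proof (cases "t1 = t2")
  case True then show ?thesis using u i by force
next
  case False
  then obtain t where t: "t2 = Suc t" "t1 \<le> t" using assms(1) by (cases t2) auto
  have Cc: "CD Lf t = Cc" using assms(2) t by auto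
  have fin: "finite Cc" using assms(3,4) card_ge_0_finite by blast
  have "real k * u \<le> (\<Sum>j\<in>Cc. real (cnt (HD Lf t1) j))"
    using sum_mono[of Cc "\<lambda>_. u" "\<lambda>j. real (cnt (HD Lf t1) j)"] u assms(3) by simp
  also have "\<dots> + real (t2 - t1) = (\<Sum>j\<in>Cc. real (cnt (HD Lf t2) j))"
    using phase_sum[OF assms(1,2)] by (metis of_nat_add of_nat_sum)
  also have "\<dots> \<le> (\<Sum>j\<in>Cc. real (cnt (HD Lf t2) i) + 1)"
  proof (rule sum_mono)
    fix j assume j: "j \<in> Cc"
    have "cnt (HD Lf t2) j \<le> cnt (HD Lf t2) i + 1" using balance'[of j Lf t i] Cc i j t by blast
    then show "real (cnt (HD Lf t2) j) \<le> real (cnt (HD Lf t2) i) + 1" by simp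
  qed
  also have "\<dots> = real k * (real (cnt (HD Lf t2) i) + 1)" using assms(3) by simp
  finally have "real k * u + real (t2 - t1) \<le> real k * (real (cnt (HD Lf t2) i) + 1)" by simp
  then show ?thesis using assms(4) by (simp add: field_simps)
qed

definition Tp :: "nat \<Rightarrow> nat" where "Tp k = (if k \<le> K then TT k else 0)"

definition Ck :: "(nat \<Rightarrow> nat) \<Rightarrow> nat \<Rightarrow> nat set" where "Ck Lf k = {1..K} - Lf ` {k+1..K}"

lemma Tp_mono: "2 \<le> k \<Longrightarrow> Tp (Suc k) \<le> Tp k"
  unfolding Tp_def using time_mono[of k "Suc k"] by auto

lemma phase_C: assumes "2 \<le> k" "k \<le> K" "Tp (Suc k) \<le> s" "s < TT k"
  shows "CD Lf s = Ck Lf k"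
proof -
  have "{k'\<in>{2..K}. TT k' \<le> s} = {k+1..K}"
  proof (intro equalityI subsetI)
    fix x assume x: "x \<in> {k'\<in>{2..K}. TT k' \<le> s}"
    show "x \<in> {k+1..K}"
    proof (rule ccontr)
      assume "x \<notin> {k+1..K}" then have "x \<le> k" using x by auto
      then have "TT k \<le> TT x" using time_mono[of x k] x by auto
      then show False using x assms by auto
    qed
  next
    fix x assume x: "x \<in> {k+1..K}"
    then have "TT x \<le> TT (Suc k)" using time_mono[of "Suc k" x] assms by auto
    moreover have "Tp (Suc k) = TT (Suc k)" using x unfolding Tp_def by auto
    ultimately show "x \<in> {k'\<in>{2..K}. TT k' \<le> s}" using x assms by auto
  qed
  then show ?thesis unfolding Cdet_def Ck_def by simp
qed

lemma card_Ck: assumes "good Lf" "1 \<le> k" "k \<le> K" shows "card (Ck Lf k) = k"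
proof -
  have sub: "Lf ` {k+1..K} \<subseteq> {1..K}" using assms unfolding good_def by auto
  have inj: "inj_on Lf {k+1..K}" using assms unfolding good_def by (auto intro: inj_on_subset)
  have "card (Lf ` {k+1..K}) = K - k" using card_image[OF inj] by simp
  then show ?thesis unfolding Ck_def using card_Diff_subset[OF _ sub] assms by simp
qed

definition V :: "nat \<Rightarrow> real" where
  "V k = (\<Sum>j=k..K. real (Tp j - Tp (Suc j)) / real j - 1)"

lemma count_lower: assumes "good Lf" "2 \<le> k" "k \<le> Suc K" "i \<in> Ck Lf k"
  shows "real (cnt (HD Lf (Tp k)) i) \<ge> V k"
  using assms(2-4)
proof (induction "Suc K - k" arbitrary: k i)
  case 0
  then have "k = Suc K" by simp
  then show ?case unfolding V_def Tp_def by simp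
next
  case (Suc d)
  then have k: "k \<le> K" "2 \<le> k" by auto
  have IH: "\<forall>j\<in>Ck Lf (Suc k). real (cnt (HD Lf (Tp (Suc k))) j) \<ge> V (Suc k)"
    using Suc.hyps(1)[of "Suc k"] Suc.hyps(2) k by auto
  have sub: "Ck Lf k \<subseteq> Ck Lf (Suc k)" unfolding Ck_def by auto
  have "real (cnt (HD Lf (TT k)) i) \<ge> V (Suc k) + real (TT k - Tp (Suc k)) / real k - 1"
  proof (rule phase_bound[where Cc="Ck Lf k"])
    show "Tp (Suc k) \<le> TT k" using Tp_mono[of k] k unfolding Tp_def by auto
    show "\<forall>s. Tp (Suc k) \<le> s \<and> s < TT k \<longrightarrow> CD Lf s = Ck Lf k" using phase_C k by blast
    show "card (Ck Lf k) = k" using card_Ck assms(1) k by auto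
    show "0 < k" using k by simp
    show "\<forall>j\<in>Ck Lf k. V (Suc k) \<le> real (cnt (HD Lf (Tp (Suc k))) j)" using IH sub by blast
    show "i \<in> Ck Lf k" by fact
  qed
  moreover have "V k = real (Tp k - Tp (Suc k)) / real k - 1 + V (Suc k)"
    unfolding V_def using k by (simp add: sum.atLeast_Suc_atMost)
  moreover have "Tp k = TT k" using k unfolding Tp_def by simp
  ultimately show ?case by simp
qed

lemma V_lower: assumes "2 \<le> k" "k \<le> K" shows "V k \<ge> bae_w K \<beta> k * real T - 2 * real K"
proof -
  have X: "real (TT j) \<ge> (\<Sum>i=j..K. \<beta> i) * real T - 1/2" "real (TT j) \<le> (\<Sum>i=j..K. \<beta> i) * real T + 1/2"
    if "2 \<le> j" for j
  proof -
    have "(\<Sum>i=j..K. \<beta> i) \<ge> 0" by (rule sum_nonneg) (use beta that in auto)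
    then have "round ((\<Sum>i=j..K. \<beta> i) * real T) \<ge> 0"
      by (metis of_nat_0_le_iff round_0 round_mono zero_le_mult_iff)
    then have eq: "real (TT j) = of_int (round ((\<Sum>i=j..K. \<beta> i) * real T))"
      unfolding bae_time_def by simp
    show "real (TT j) \<ge> (\<Sum>i=j..K. \<beta> i) * real T - 1/2" unfolding eq by (rule of_int_round_ge)
    show "real (TT j) \<le> (\<Sum>i=j..K. \<beta> i) * real T + 1/2" unfolding eq by (rule of_int_round_le)
  qed
  have trm: "real (Tp j - Tp (Suc j)) / real j - 1 \<ge> \<beta> j * real T / real j - 2" if j: "j \<in> {k..K}" for j
  proof -
    have jj: "2 \<le> j" "j \<le> K" using j assms by auto
    have le: "Tp (Suc j) \<le> Tp j" using Tp_mono jj by simp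
    have "real (Tp j) - real (Tp (Suc j)) \<ge> \<beta> j * real T - 1"
    proof (cases "Suc j \<le> K")
      case True
      have s: "(\<Sum>i=j..K. \<beta> i) = \<beta> j + (\<Sum>i=Suc j..K. \<beta> i)" using jj by (simp add: sum.atLeast_Suc_atMost)
      show ?thesis using X[of j] X[of "Suc j"] jj True unfolding Tp_def s by (simp add: algebra_simps)
    next
      case False
      then have "j = K" using jj by simp
      then show ?thesis using X[of j] jj unfolding Tp_def by simp
    qed
    then have "real (Tp j - Tp (Suc j)) \<ge> \<beta> j * real T - 1" using le by (simp add: of_nat_diff)
    then have "real (Tp j - Tp (Suc j)) / real j \<ge> (\<beta> j * real T - 1) / real j"
      using jj by (simp add: divide_right_mono)
    moreover have "(\<beta> j * real T - 1) / real j \<ge> \<beta> j * real T / real j - 1"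
      using jj by (simp add: diff_divide_distrib)
    ultimately show ?thesis by simp
  qed
  have "V k \<ge> (\<Sum>j=k..K. \<beta> j * real T / real j - 2)"
    unfolding V_def by (rule sum_mono) (rule trm)
  also have "(\<Sum>j=k..K. \<beta> j * real T / real j - 2) = bae_w K \<beta> k * real T - 2 * real (Suc K - k)"
    unfolding bae_w_def by (simp add: sum_subtractf sum_distrib_right)
  finally show ?thesis using assms by simp
qed

lemma hdet_agree: "(\<forall>k\<in>{2..K}. TT k < t \<longrightarrow> L k = L' k) \<Longrightarrow> HD L t = HD L' t"
proof (induction t)
  case 0 then show ?case by simp
next
  case (Suc t)
  have "HD L t = HD L' t" using Suc by auto
  moreover have "CD L t = CD L' t" unfolding Cdet_def using Suc.prems by (auto simp: image_def)
  ultimately show ?case by (simp add: Let_def)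
qed

lemma Ck_agree: "(\<forall>k\<in>{Suc n..K}. L k = L' k) \<Longrightarrow> Ck L n = Ck L' n"
  unfolding Ck_def by (auto simp: image_def)

end

locale baeY = bae +
  fixes eb :: "nat list \<Rightarrow> nat set \<Rightarrow> nat" and Y :: "nat \<times> nat \<Rightarrow> real"
  assumes ebv: "valid_tiebreak eb"
begin

definition tie :: "nat list \<Rightarrow> nat set \<Rightarrow> nat set" where
  "tie h C = {i \<in> C. emp_mean Y h i = Min (emp_mean Y h ` C)}"

definition fstep :: "nat \<Rightarrow> bae_state \<Rightarrow> nat \<Rightarrow> bae_state" where
  "fstep t = (\<lambda>(h, C, L) n. if TT n = t then
          (let l = eb h {i \<in> C. emp_mean Y h i = Min (emp_mean Y h ` C)}
           in (h, C - {l}, L(n := l)))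
        else (h, C, L))"

lemma bae_elim_eq: "bae_elim K \<beta> T eb Y t st = foldl (fstep t) st (rev [2..<Suc K])"
  unfolding bae_elim_def fstep_def ..

lemma fstep_simp: "fstep t (h, C, L) n = (if TT n = t then (h, C - {eb h (tie h C)}, L(n := eb h (tie h C))) else (h, C, L))"
  unfolding fstep_def tie_def by (simp add: Let_def)

lemma foldl_rev_upt: "j \<le> K \<Longrightarrow> foldl g st (rev [j..<Suc K]) = g (foldl g st (rev [Suc j..<Suc K])) j"
  by (simp add: upt_conv_Cons del: upt_Suc)

lemma eb_in: assumes "finite C" "C \<noteq> {}" shows "eb h (tie h C) \<in> tie h C"
proof -
  have fin: "finite (tie h C)" using assms unfolding tie_def by simp
  have "\<forall>S. finite S \<and> S \<noteq> {} \<longrightarrow> eb h S \<in> S" using ebv unfolding valid_tiebreak_def by blast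
  then show ?thesis using fin tie_ne[OF assms, of "emp_mean Y h"] unfolding tie_def by blast
qed

lemma tie_sub: "tie h C \<subseteq> C" unfolding tie_def by auto

definition Dj :: "nat \<Rightarrow> nat \<Rightarrow> nat set" where
  "Dj t j = {k\<in>{2..K}. TT k < t \<or> (j \<le> k \<and> TT k = t)}"

lemma Dj_Suc: assumes "2 \<le> j" "j \<le> K" "TT j = t" shows "Dj t (Suc j) = {Suc j..K}"
proof (intro equalityI subsetI)
  fix x assume x: "x \<in> Dj t (Suc j)"
  show "x \<in> {Suc j..K}"
  proof (rule ccontr)
    assume "x \<notin> {Suc j..K}" then have "x \<le> j" using x unfolding Dj_def by auto
    moreover have "TT j \<le> TT x" using time_mono[of x j] x `x \<le> j` unfolding Dj_def by auto
    moreover have "TT x < t \<or> (Suc j \<le> x \<and> TT x = t)" using x by (simp add: Dj_def)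
    ultimately show False using assms(3) by linarith
  qed
next
  fix x assume x: "x \<in> {Suc j..K}"
  then have "TT x \<le> TT j" using time_mono[of j x] assms by auto
  then have "TT x < t \<or> TT x = t" using assms by linarith
  then show "x \<in> Dj t (Suc j)" using x assms unfolding Dj_def by auto
qed

lemma elim_inv:
  assumes P1: "C = {1..K} - L ` {k\<in>{2..K}. TT k < t}"
    and P2: "\<forall>k. \<not> (k\<in>{2..K} \<and> TT k < t) \<longrightarrow> L k = 0"
    and P3: "inj_on L {k\<in>{2..K}. TT k < t}" "L ` {k\<in>{2..K}. TT k < t} \<subseteq> {1..K}"
    and j: "2 \<le> j" "j \<le> Suc K"
  shows "case foldl (fstep t) (h, C, L) (rev [j..<Suc K]) of (h', C', L') \<Rightarrow>
      h' = h \<and> C' = {1..K} - L' ` Dj t j \<and> (\<forall>k. k \<notin> Dj t j \<longrightarrow> L' k = 0)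
      \<and> inj_on L' (Dj t j) \<and> L' ` Dj t j \<subseteq> {1..K}
      \<and> (\<forall>k\<in>{j..K}. TT k = t \<longrightarrow> L' k = eb h (tie h (Ck L' k)))
      \<and> (\<forall>k. TT k < t \<longrightarrow> L' k = L k)"
  using j
proof (induction "Suc K - j" arbitrary: j)
  case 0
  then have jK: "j = Suc K" by simp
  have D: "Dj t j = {k\<in>{2..K}. TT k < t}" unfolding Dj_def jK by auto
  show ?case unfolding jK using P1 P2 P3 D jK by simp
next
  case (Suc d)
  then have jj: "2 \<le> j" "j \<le> K" by auto
  obtain h2 C2 L2 where G: "foldl (fstep t) (h, C, L) (rev [Suc j..<Suc K]) = (h2, C2, L2)"
    by (metis prod_cases3)
  have IH: "h2 = h \<and> C2 = {1..K} - L2 ` Dj t (Suc j) \<and> (\<forall>k. k \<notin> Dj t (Suc j) \<longrightarrow> L2 k = 0)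
      \<and> inj_on L2 (Dj t (Suc j)) \<and> L2 ` Dj t (Suc j) \<subseteq> {1..K}
      \<and> (\<forall>k\<in>{Suc j..K}. TT k = t \<longrightarrow> L2 k = eb h (tie h (Ck L2 k)))
      \<and> (\<forall>k. TT k < t \<longrightarrow> L2 k = L k)"
    using Suc.hyps(1)[of "Suc j"] Suc.hyps(2) jj G by auto
  have F: "foldl (fstep t) (h, C, L) (rev [j..<Suc K]) = fstep t (h2, C2, L2) j"
    using foldl_rev_upt[OF jj(2), of "fstep t" "(h, C, L)"] G by (simp del: upt_Suc)
  show ?case
  proof (cases "TT j = t")
    case False
    have D: "Dj t j = Dj t (Suc j)" unfolding Dj_def using False by (auto simp: le_Suc_eq) (metis Suc_leI le_neq_implies_less)
    have "\<forall>k\<in>{j..K}. TT k = t \<longrightarrow> k \<in> {Suc j..K}"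
    proof (intro ballI impI)
      fix k assume k: "k \<in> {j..K}" "TT k = t"
      then have "k \<noteq> j" using False by auto
      then show "k \<in> {Suc j..K}" using k by auto
    qed
    then show ?thesis unfolding F fstep_simp using False IH D by auto
  next
    case True
    define l where "l = eb h (tie h C2)"
    have D2: "Dj t (Suc j) = {Suc j..K}" using Dj_Suc[OF jj True] .
    have C2: "C2 = Ck L2 j" using IH D2 unfolding Ck_def by simp
    have "card C2 \<ge> K - card {Suc j..K}" unfolding C2 Ck_def using card_diff_image_ge[of "{Suc j..K}" L2] jj by simp
    then have "card C2 \<ge> 2" using jj by simp
    then have C2ne: "C2 \<noteq> {}" "finite C2" by (auto intro: card_ge_0_finite)
    have lin: "l \<in> C2" using eb_in[OF C2ne(2,1), of h] tie_sub unfolding l_def by blast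
    define L' where "L' = L2(j := l)"
    have jD: "j \<notin> Dj t (Suc j)" using D2 by auto
    have Dj: "Dj t j = insert j (Dj t (Suc j))" unfolding Dj_def using True jj by (auto simp: le_Suc_eq)
    have agree: "\<forall>k\<in>Dj t (Suc j). L' k = L2 k" using jD unfolding L'_def by auto
    have img: "L' ` Dj t (Suc j) = L2 ` Dj t (Suc j)" using agree by (auto simp: image_def)
    have res: "fstep t (h2, C2, L2) j = (h, C2 - {l}, L')" using IH True unfolding fstep_simp l_def L'_def by simp
    have c1: "C2 - {l} = {1..K} - L' ` Dj t j" using IH img unfolding Dj L'_def by auto
    have c2: "\<forall>k. k \<notin> Dj t j \<longrightarrow> L' k = 0" using IH unfolding Dj L'_def by auto
    have c3: "inj_on L' (Dj t j)" unfolding Dj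
    proof (rule inj_on_insert[THEN iffD2], intro conjI)
      show "inj_on L' (Dj t (Suc j))" using IH agree inj_on_cong by (metis (mono_tags, lifting))
      show "L' j \<notin> L' ` (Dj t (Suc j) - {j})" using lin IH img jD unfolding L'_def by auto
    qed
    have c4: "L' ` Dj t j \<subseteq> {1..K}" using IH img lin unfolding Dj L'_def by auto
    have c5: "\<forall>k\<in>{j..K}. TT k = t \<longrightarrow> L' k = eb h (tie h (Ck L' k))"
    proof (intro ballI impI)
      fix k assume k: "k \<in> {j..K}" "TT k = t"
      have ck: "Ck L' k = Ck L2 k" by (rule Ck_agree) (use k in \<open>auto simp: L'_def\<close>)
      show "L' k = eb h (tie h (Ck L' k))"
      proof (cases "k = j")
        case True then show ?thesis using C2 ck unfolding L'_def l_def by simp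
      next
        case False then show ?thesis using IH k ck unfolding L'_def by auto
      qed
    qed
    have c6: "\<forall>k. TT k < t \<longrightarrow> L' k = L k" using IH True unfolding L'_def by auto
    show ?thesis unfolding F res using c1 c2 c3 c4 c5 c6 by simp
  qed
qed


definition DD :: "nat \<Rightarrow> nat set" where "DD t = {k\<in>{2..K}. TT k \<le> t}"

lemma Dj_2: "Dj t 2 = DD t" unfolding Dj_def DD_def by auto

definition INV :: "nat \<Rightarrow> bae_state \<Rightarrow> bool" where
  "INV t st = (case st of (h, C, L) \<Rightarrow> C = {1..K} - L ` DD t \<and> (\<forall>k. k \<notin> DD t \<longrightarrow> L k = 0)
     \<and> inj_on L (DD t) \<and> L ` DD t \<subseteq> {1..K} \<and> h = HD L t
     \<and> (\<forall>k\<in>DD t. L k = eb (HD L (TT k)) (tie (HD L (TT k)) (Ck L k))))"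

lemma run_inv: "INV t (bae_run K \<beta> T tb eb Y t)"
proof (induction t)
  case 0
  have E: "bae_run K \<beta> T tb eb Y 0 = foldl (fstep 0) ([], {1..K}, \<lambda>_. 0) (rev [2..<Suc K])"
    by (simp add: bae_elim_eq)
  have "case foldl (fstep 0) ([], {1..K}, \<lambda>_. 0) (rev [2..<Suc K]) of (h', C', L') \<Rightarrow>
      h' = [] \<and> C' = {1..K} - L' ` Dj 0 2 \<and> (\<forall>k. k \<notin> Dj 0 2 \<longrightarrow> L' k = 0)
      \<and> inj_on L' (Dj 0 2) \<and> L' ` Dj 0 2 \<subseteq> {1..K}
      \<and> (\<forall>k\<in>{2..K}. TT k = 0 \<longrightarrow> L' k = eb [] (tie [] (Ck L' k)))
      \<and> (\<forall>k. TT k < 0 \<longrightarrow> L' k = (\<lambda>_. 0) k)"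
    by (rule elim_inv) (use K2 in auto)
  then show ?case unfolding E INV_def Dj_2 by (auto simp: DD_def split: prod.splits)
next
  case (Suc t)
  obtain h C L where R: "bae_run K \<beta> T tb eb Y t = (h, C, L)" by (metis prod_cases3)
  have I: "C = {1..K} - L ` DD t" "\<forall>k. k \<notin> DD t \<longrightarrow> L k = 0"
     "inj_on L (DD t)" "L ` DD t \<subseteq> {1..K}" "h = HD L t"
     "\<forall>k\<in>DD t. L k = eb (HD L (TT k)) (tie (HD L (TT k)) (Ck L k))"
    using Suc.IH unfolding R INV_def by auto
  define a where "a = tb h {i \<in> C. cnt h i = Min (cnt h ` C)}"
  have E: "bae_run K \<beta> T tb eb Y (Suc t) = foldl (fstep (Suc t)) (h @ [a], C, L) (rev [2..<Suc K])"
    by (simp add: R bae_elim_eq a_def)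
  have Dlt: "{k\<in>{2..K}. TT k < Suc t} = DD t" unfolding DD_def by auto
  obtain h' C' L' where G: "foldl (fstep (Suc t)) (h @ [a], C, L) (rev [2..<Suc K]) = (h', C', L')"
    by (metis prod_cases3)
  have "case foldl (fstep (Suc t)) (h @ [a], C, L) (rev [2..<Suc K]) of (h', C', L') \<Rightarrow>
      h' = h @ [a] \<and> C' = {1..K} - L' ` Dj (Suc t) 2 \<and> (\<forall>k. k \<notin> Dj (Suc t) 2 \<longrightarrow> L' k = 0)
      \<and> inj_on L' (Dj (Suc t) 2) \<and> L' ` Dj (Suc t) 2 \<subseteq> {1..K}
      \<and> (\<forall>k\<in>{2..K}. TT k = Suc t \<longrightarrow> L' k = eb (h @ [a]) (tie (h @ [a]) (Ck L' k)))
      \<and> (\<forall>k. TT k < Suc t \<longrightarrow> L' k = L k)"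
    by (rule elim_inv) (use K2 I Dlt in \<open>auto simp: DD_def\<close>)
  then have O: "h' = h @ [a]" "C' = {1..K} - L' ` DD (Suc t)" "\<forall>k. k \<notin> DD (Suc t) \<longrightarrow> L' k = 0"
      "inj_on L' (DD (Suc t))" "L' ` DD (Suc t) \<subseteq> {1..K}"
      "\<forall>k\<in>{2..K}. TT k = Suc t \<longrightarrow> L' k = eb (h @ [a]) (tie (h @ [a]) (Ck L' k))"
      "\<forall>k. TT k < Suc t \<longrightarrow> L' k = L k"
    unfolding G Dj_2 by auto
  have agr: "HD L' s = HD L s" if "s \<le> Suc t" for s
    by (rule hdet_agree) (use O(7) that in auto)
  have CD: "CD L t = C" using I(1) unfolding Cdet_def DD_def by simp
  have CD': "CD L' t = C"
  proof -
    have "L' ` {k\<in>{2..K}. TT k \<le> t} = L ` {k\<in>{2..K}. TT k \<le> t}"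
      using O(7) by (intro image_cong) auto
    then show ?thesis using CD unfolding Cdet_def by simp
  qed
  have H: "h @ [a] = HD L' (Suc t)" using agr[of t] I(5) CD' by (simp add: a_def)
  have "\<forall>k\<in>DD (Suc t). L' k = eb (HD L' (TT k)) (tie (HD L' (TT k)) (Ck L' k))"
  proof
    fix k assume k: "k \<in> DD (Suc t)"
    show "L' k = eb (HD L' (TT k)) (tie (HD L' (TT k)) (Ck L' k))"
    proof (cases "TT k = Suc t")
      case True then show ?thesis using O(6) k H unfolding DD_def by auto
    next
      case False
      then have lt: "TT k < Suc t" "k \<in> DD t" using k unfolding DD_def by auto
      have ck: "Ck L' k = Ck L k"
      proof (rule Ck_agree, intro ballI)
        fix x assume "x \<in> {Suc k..K}"
        then have "TT x \<le> TT k" using time_mono[of k x] k unfolding DD_def by auto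
        then show "L' x = L x" using O(7) lt by auto
      qed
      show ?thesis using I(6) lt O(7) agr[of "TT k"] ck by auto
    qed
  qed
  then show ?case unfolding E G INV_def using O H by auto
qed

lemma DD_T: "DD T = {2..K}" unfolding DD_def using time_le_T by auto

lemma event_char:
  assumes n: "n \<in> {2..K}" and ev: "bae_eliminated K \<beta> T tb eb Y n = Istar"
  shows "\<exists>Lf. good Lf \<and> Istar \<in> Ck Lf n \<and>
     (\<forall>i\<in>Ck Lf n. emp_mean Y (HD Lf (TT n)) Istar \<le> emp_mean Y (HD Lf (TT n)) i)"
proof -
  obtain h C L where R: "bae_run K \<beta> T tb eb Y T = (h, C, L)" by (metis prod_cases3)
  have I: "\<forall>k. k \<notin> {2..K} \<longrightarrow> L k = 0" "inj_on L {2..K}" "L ` {2..K} \<subseteq> {1..K}"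
     "\<forall>k\<in>{2..K}. L k = eb (HD L (TT k)) (tie (HD L (TT k)) (Ck L k))"
    using run_inv[of T] unfolding R INV_def DD_T by auto
  have g: "good L" unfolding good_def using I by auto
  have Ln: "L n = Istar" using ev R unfolding bae_eliminated_def by simp
  have cardC: "card (Ck L n) = n" using card_Ck[OF g] n by auto
  then have ne: "Ck L n \<noteq> {}" "finite (Ck L n)" using n by (auto intro: card_ge_0_finite)
  have "Istar \<in> tie (HD L (TT n)) (Ck L n)"
    using eb_in[OF ne(2,1), of "HD L (TT n)"] I(4) n Ln by auto
  then have "Istar \<in> Ck L n \<and> (\<forall>i\<in>Ck L n. emp_mean Y (HD L (TT n)) Istar \<le> emp_mean Y (HD L (TT n)) i)"
    unfolding tie_def using ne by auto
  then show ?thesis using g by blast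
qed

end



lemma normal_density_shift:
  assumes "\<sigma> > 0"
  shows "normal_density \<mu> \<sigma> x * exp (b * x) = exp (b * \<mu> + b^2 * \<sigma>^2 / 2) * normal_density (\<mu> + b * \<sigma>^2) \<sigma> x"
proof -
  have e: "-(x - \<mu>)\<^sup>2 / (2 * \<sigma>\<^sup>2) + b * x = b * \<mu> + b^2 * \<sigma>^2 / 2 + -(x - (\<mu> + b * \<sigma>^2))\<^sup>2 / (2 * \<sigma>\<^sup>2)"
  proof -
    have s: "\<sigma>\<^sup>2 \<noteq> 0" using assms by simp
    have "(x - (\<mu> + b * \<sigma>^2))\<^sup>2 = (x - \<mu>)\<^sup>2 - 2 * b * \<sigma>^2 * (x - \<mu>) + b^2 * \<sigma>^2 * \<sigma>^2"
      by (simp add: power2_eq_square algebra_simps)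
    then have "-(x - (\<mu> + b * \<sigma>^2))\<^sup>2 / (2 * \<sigma>\<^sup>2) = -(x - \<mu>)\<^sup>2 / (2 * \<sigma>\<^sup>2) + b * (x - \<mu>) - b^2 * \<sigma>^2 / 2"
      using s by (simp add: field_simps)
    then show ?thesis by (simp only: right_diff_distrib)
  qed
  have "normal_density \<mu> \<sigma> x * exp (b * x) = 1 / sqrt (2 * pi * \<sigma>\<^sup>2) * exp (-(x - \<mu>)\<^sup>2 / (2 * \<sigma>\<^sup>2) + b * x)"
    unfolding normal_density_def exp_add by simp
  also have "\<dots> = 1 / sqrt (2 * pi * \<sigma>\<^sup>2) * exp (b * \<mu> + b^2 * \<sigma>^2 / 2 + -(x - (\<mu> + b * \<sigma>^2))\<^sup>2 / (2 * \<sigma>\<^sup>2))"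
    by (simp only: e)
  also have "\<dots> = exp (b * \<mu> + b^2 * \<sigma>^2 / 2) * normal_density (\<mu> + b * \<sigma>^2) \<sigma> x"
    unfolding normal_density_def exp_add by simp
  finally show ?thesis .
qed

lemma nn_integral_normal_density: "\<sigma> > 0 \<Longrightarrow> (\<integral>\<^sup>+ x. ennreal (normal_density \<mu> \<sigma> x) \<partial>lborel) = 1"
proof -
  assume "\<sigma> > 0"
  interpret prob_space "density lborel (normal_density \<mu> \<sigma>)" by (rule prob_space_normal_density) fact
  have "emeasure (density lborel (normal_density \<mu> \<sigma>)) UNIV = 1" using emeasure_space_1 by simp
  then show ?thesis by (simp add: emeasure_density)
qed

lemma normal_mgf:
  assumes "\<sigma> > 0"
  shows "(\<integral>\<^sup>+ x. ennreal (exp (b * x)) \<partial>density lborel (normal_density \<mu> \<sigma>)) = ennreal (exp (b * \<mu> + b^2 * \<sigma>^2 / 2))"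
proof -
  have "(\<integral>\<^sup>+ x. ennreal (exp (b * x)) \<partial>density lborel (normal_density \<mu> \<sigma>))
      = (\<integral>\<^sup>+ x. ennreal (normal_density \<mu> \<sigma> x) * ennreal (exp (b * x)) \<partial>lborel)"
    by (rule nn_integral_density) auto
  also have "\<dots> = (\<integral>\<^sup>+ x. ennreal (exp (b * \<mu> + b^2 * \<sigma>^2 / 2)) * ennreal (normal_density (\<mu> + b * \<sigma>^2) \<sigma> x) \<partial>lborel)"
    by (intro nn_integral_cong) (simp add: normal_density_shift[OF assms] ennreal_mult'[symmetric] normal_density_nonneg)
  also have "\<dots> = ennreal (exp (b * \<mu> + b^2 * \<sigma>^2 / 2)) * (\<integral>\<^sup>+ x. ennreal (normal_density (\<mu> + b * \<sigma>^2) \<sigma> x) \<partial>lborel)"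
    by (rule nn_integral_cmult) simp
  finally show ?thesis by (simp add: nn_integral_normal_density[OF assms])
qed

lemma outcome_mgf:
  assumes "\<sigma>2 > 0"
  shows "(\<integral>\<^sup>+ Y. ennreal (exp (\<Sum>p\<in>{1..T}\<times>{1..K}. c p * Y p)) \<partial>outcome_space K \<sigma>2 \<theta> T)
     = ennreal (exp (\<Sum>p\<in>{1..T}\<times>{1..K}. c p * \<theta> (snd p) + (c p)^2 * \<sigma>2 / 2))"
proof -
  define M where "M = (\<lambda>(t::nat, i::nat). density lborel (normal_density (\<theta> i) (sqrt \<sigma>2)))"
  have ps: "prob_space (M p)" for p
  proof -
    obtain t i where p: "p = (t, i)" by (cases p)
    have "sqrt \<sigma>2 > 0" using assms by simp
    then show ?thesis unfolding p M_def by (simp add: prob_space_normal_density)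
  qed
  interpret product_sigma_finite M
    by (rule product_sigma_finite.intro) (rule prob_space_imp_sigma_finite[OF ps])
  let ?I = "{1..T}\<times>{1..K}"
  have "(\<integral>\<^sup>+ Y. ennreal (exp (\<Sum>p\<in>?I. c p * Y p)) \<partial>PiM ?I M) = (\<integral>\<^sup>+ Y. (\<Prod>p\<in>?I. ennreal (exp (c p * Y p))) \<partial>PiM ?I M)"
    by (intro nn_integral_cong) (simp add: exp_sum prod_ennreal)
  also have "\<dots> = (\<Prod>p\<in>?I. \<integral>\<^sup>+ x. ennreal (exp (c p * x)) \<partial>M p)"
    by (rule product_nn_integral_prod) (auto simp: M_def split: prod.splits)
  also have "\<dots> = (\<Prod>p\<in>?I. ennreal (exp (c p * \<theta> (snd p) + (c p)^2 * \<sigma>2 / 2)))"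
  proof (intro prod.cong refl)
    fix p assume "p \<in> ?I"
    obtain t i where p: "p = (t, i)" by (cases p)
    have "sqrt \<sigma>2 > 0" using assms by simp
    from normal_mgf[OF this, where b="c p" and \<mu>="\<theta> i"] show "(\<integral>\<^sup>+ x. ennreal (exp (c p * x)) \<partial>M p) = ennreal (exp (c p * \<theta> (snd p) + (c p)^2 * \<sigma>2 / 2))"
      using assms by (simp add: M_def p)
  qed
  also have "\<dots> = ennreal (exp (\<Sum>p\<in>?I. c p * \<theta> (snd p) + (c p)^2 * \<sigma>2 / 2))"
    by (simp add: exp_sum prod_ennreal)
  finally show ?thesis unfolding outcome_space_def M_def .
qed


lemma cnt_count_list: "cnt h i = count_list h i"
  by (induction h) (auto simp: cnt_def)

lemma cnt_Cons: "cnt (a # h) i = cnt h i + (if a = i then 1 else 0)"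
  by (simp add: cnt_def)

lemma sum_nth_group:
  assumes "set h \<subseteq> X" "finite X"
  shows "(\<Sum>s<length h. g (h ! s)) = (\<Sum>i\<in>X. real (cnt h i) * g i)"
  using assms(1)
proof (induction h)
  case Nil then show ?case by (simp add: cnt_def)
next
  case (Cons a h)
  have aX: "a \<in> X" using Cons.prems by simp
  have "(\<Sum>s<length (a # h). g ((a # h) ! s)) = g a + (\<Sum>s<length h. g (h ! s))"
    by (simp add: sum.lessThan_Suc_shift del: sum.lessThan_Suc)
  also have "\<dots> = g a + (\<Sum>i\<in>X. real (cnt h i) * g i)" using Cons by simp
  also have "\<dots> = (\<Sum>i\<in>X. real (cnt (a # h) i) * g i)"
  proof -
    have "(\<Sum>i\<in>X. real (if a = i then 1 else 0) * g i) = (\<Sum>i\<in>X. if a = i then g i else 0)"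
      by (rule sum.cong) auto
    also have "\<dots> = g a" using aX assms(2) by simp
    finally show ?thesis unfolding cnt_Cons of_nat_add distrib_right sum.distrib by simp
  qed
  finally show ?case .
qed

lemma exists_level:
  fixes \<theta> :: "nat \<Rightarrow> real" and A :: "nat set" and top :: real
  assumes "finite A"
  shows "\<exists>c0. c0 \<le> top \<and> c0 + (\<Sum>i\<in>A. max 0 (c0 - \<theta> i)) = top"
proof -
  define f where "f = (\<lambda>x. x + (\<Sum>i\<in>A. max 0 (x - \<theta> i)))"
  define lo where "lo = Min (insert top (\<theta> ` A))"
  have lo: "lo \<le> top" "\<forall>i\<in>A. lo \<le> \<theta> i" unfolding lo_def using assms by auto
  have "f lo = lo" unfolding f_def using lo by (simp add: max_def) (intro sum.neutral, auto)
  then have flo: "f lo \<le> top" using lo by simp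
  have ftop: "top \<le> f top" unfolding f_def by (simp add: sum_nonneg)
  have "continuous_on {lo..top} f" unfolding f_def by (intro continuous_intros)
  from IVT'[of f lo top top, OF flo ftop lo(1) this] obtain x where "lo \<le> x" "x \<le> top" "f x = top" by blast
  then show ?thesis unfolding f_def by blast
qed

lemma union_chernoff:
  fixes g :: "'f \<Rightarrow> 'a \<Rightarrow> ennreal"
  assumes F: "finite F" and meas: "\<forall>f\<in>F. g f \<in> borel_measurable M"
    and cover: "\<forall>x\<in>A. \<exists>f\<in>F. 1 \<le> g f x" and A: "A \<subseteq> space M"
  shows "emeasure M A \<le> (\<Sum>f\<in>F. \<integral>\<^sup>+ x. g f x \<partial>M)"
proof (cases "A \<in> sets M")
  case False then show ?thesis by (simp add: emeasure_notin_sets)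
next
  case True
  have "emeasure M A = (\<integral>\<^sup>+ x. indicator A x \<partial>M)" using True by simp
  also have "\<dots> \<le> (\<integral>\<^sup>+ x. (\<Sum>f\<in>F. g f x) \<partial>M)"
  proof (rule nn_integral_mono)
    fix x assume "x \<in> space M"
    show "indicator A x \<le> (\<Sum>f\<in>F. g f x)"
    proof (cases "x \<in> A")
      case True
      then obtain f where f: "f \<in> F" "1 \<le> g f x" using cover by blast
      have "g f x \<le> (\<Sum>f\<in>F. g f x)" by (rule member_le_sum) (use f F in auto)
      then show ?thesis using True f by simp
    qed simp
  qed
  also have "\<dots> = (\<Sum>f\<in>F. \<integral>\<^sup>+ x. g f x \<partial>M)" by (rule nn_integral_sum) (use meas in auto)
  finally show ?thesis .
qed

lemma outcome_meas:
  "(\<lambda>Y. ennreal (exp (\<Sum>p\<in>{1..T}\<times>{1..K}. c p * Y p))) \<in> borel_measurable (outcome_space K \<sigma>2 \<theta> T)"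
proof -
  let ?M = "(\<lambda>(t::nat, i::nat). density lborel (normal_density (\<theta> i) (sqrt \<sigma>2)))"
  have m: "(\<lambda>x. x p) \<in> borel_measurable (PiM ({1..T}\<times>{1..K}) ?M)" if "p \<in> {1..T}\<times>{1..K}" for p
  proof -
    have m1: "(\<lambda>x. x p) \<in> measurable (PiM ({1..T}\<times>{1..K}) ?M) (?M p)"
      by (rule measurable_component_singleton[OF that])
    have se: "sets (?M p) = sets borel"
    proof -
      obtain t i where p: "p = (t, i)" by (cases p)
      show ?thesis unfolding p by simp
    qed
    have eq: "measurable (PiM ({1..T}\<times>{1..K}) ?M) (?M p) = borel_measurable (PiM ({1..T}\<times>{1..K}) ?M)"
      by (rule measurable_cong_sets[OF refl se])
    show ?thesis using m1 unfolding eq .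
  qed
  have s: "(\<lambda>Y. \<Sum>p\<in>{1..T}\<times>{1..K}. c p * Y p) \<in> borel_measurable (PiM ({1..T}\<times>{1..K}) ?M)"
  proof (rule borel_measurable_sum)
    fix p assume "p \<in> {1..T}\<times>{1..K}"
    from m[OF this] show "(\<lambda>Y. c p * Y p) \<in> borel_measurable (PiM ({1..T}\<times>{1..K}) ?M)" by simp
  qed
  show ?thesis unfolding outcome_space_def using s by simp
qed


definition GJ :: "real \<Rightarrow> (nat \<Rightarrow> real) \<Rightarrow> nat \<Rightarrow> nat set \<Rightarrow> real" where
  "GJ \<sigma>2 \<theta> Istar J = Inf ((\<lambda>lam. \<Sum>i\<in>J. (lam i - \<theta> i)^2 / (2 * \<sigma>2))
                     ` {lam :: nat \<Rightarrow> real. lam Istar \<le> Min (lam ` J)})"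

lemma gauss_event_bound:
  fixes h :: "nat list" and J :: "nat set" and \<theta> :: "nat \<Rightarrow> real" and m \<sigma>2 :: real
  assumes s2: "\<sigma>2 > 0" and hs: "set h \<subseteq> {1..K}" and hl: "length h \<le> T" and JK: "J \<subseteq> {1..K}"
    and IJ: "Istar \<in> J" and m: "m > 0" and cntJ: "\<forall>i\<in>J. real (cnt h i) \<ge> m"
  shows "\<exists>c. (\<forall>Y. (\<forall>i\<in>J. emp_mean Y h Istar \<le> emp_mean Y h i) \<longrightarrow> (\<Sum>p\<in>{1..T}\<times>{1..K}. c p * Y p) \<ge> 0)
     \<and> (\<Sum>p\<in>{1..T}\<times>{1..K}. c p * \<theta> (snd p) + (c p)^2 * \<sigma>2 / 2) \<le> - m * GJ \<sigma>2 \<theta> Istar J"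
proof -
  let ?I = "{1..T}\<times>{1..K}"
  have finJ: "finite J" using JK finite_subset by blast
  define A where "A = J - {Istar}"
  have finA: "finite A" "Istar \<notin> A" and JA: "J = insert Istar A" using finJ IJ unfolding A_def by auto
  obtain c0 where c0: "c0 \<le> \<theta> Istar" "c0 + (\<Sum>i\<in>A. max 0 (c0 - \<theta> i)) = \<theta> Istar"
    using exists_level[OF finA(1)] by blast
  define a where "a i = max 0 (c0 - \<theta> i)" for i
  define S where "S = (\<Sum>i\<in>A. a i)"
  define Q where "Q = (\<Sum>i\<in>A. (a i)^2)"
  have S_eq: "S = \<theta> Istar - c0" using c0 unfolding S_def a_def by simp
  have a_nn: "a i \<ge> 0" for i unfolding a_def by simp
  have aa: "a i * (c0 - \<theta> i) = (a i)^2" for i unfolding a_def by (simp add: max_def power2_eq_square)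
  define wgt where "wgt i = (if i = Istar then - S else if i \<in> A then a i else 0)" for i
  have wgt0: "i \<notin> J \<Longrightarrow> wgt i = 0" for i unfolding wgt_def A_def using IJ by auto
  have cntpos: "i \<in> J \<Longrightarrow> real (cnt h i) > 0" for i using cntJ m by force
  have cw: "real (cnt h i) * (wgt i / real (cnt h i)) = wgt i" for i
    using cntpos[of i] wgt0[of i] by (cases "i \<in> J") auto
  define d where "d s = wgt (h ! s) / real (cnt h (h ! s))" for s
  define s0 where "s0 = m / \<sigma>2"
  have s0: "s0 > 0" unfolding s0_def using m s2 by simp
  define cc where "cc p = (if fst p \<in> {1..length h} \<and> snd p = h ! (fst p - 1) then s0 * d (fst p - 1) else 0)" for p
  define \<phi> where "\<phi> s = (Suc s, h ! s)" for s
  have inj: "inj_on \<phi> {..<length h}" unfolding \<phi>_def by (auto intro: inj_onI)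
  have img: "\<phi> ` {..<length h} \<subseteq> ?I" unfolding \<phi>_def using hs hl by (auto simp: subset_iff)
  have L1: "(\<Sum>p\<in>?I. cc p * f p) = s0 * (\<Sum>s<length h. d s * f (Suc s, h ! s))" for f
  proof -
    have "(\<Sum>p\<in>?I. cc p * f p) = (\<Sum>p\<in>\<phi> ` {..<length h}. cc p * f p)"
    proof (rule sum.mono_neutral_right)
      show "finite ?I" by simp
      show "\<phi> ` {..<length h} \<subseteq> ?I" by (rule img)
      show "\<forall>p\<in>?I - \<phi> ` {..<length h}. cc p * f p = 0"
      proof
        fix p assume p: "p \<in> ?I - \<phi> ` {..<length h}"
        obtain t i where pt: "p = (t, i)" by (cases p)
        show "cc p * f p = 0"
        proof (cases "t \<in> {1..length h} \<and> i = h ! (t - 1)")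
          case True
          then have "p = \<phi> (t - 1)" "t - 1 < length h" unfolding pt \<phi>_def by auto
          then show ?thesis using p by auto
        qed (auto simp: cc_def pt)
      qed
    qed
    also have "\<dots> = (\<Sum>s<length h. cc (\<phi> s) * f (\<phi> s))" using sum.reindex[OF inj, of "\<lambda>p. cc p * f p"] by simp
    also have "\<dots> = (\<Sum>s<length h. s0 * (d s * f (Suc s, h ! s)))"
      by (intro sum.cong refl) (auto simp: cc_def \<phi>_def)
    finally show ?thesis by (simp add: sum_distrib_left)
  qed
  have grp: "(\<Sum>s<length h. g (h ! s)) = (\<Sum>i\<in>{1..K}. real (cnt h i) * g i)" for g
    by (rule sum_nth_group[OF hs]) simp
  have toJ: "(\<Sum>i\<in>{1..K}. wgt i * x i) = (\<Sum>i\<in>J. wgt i * x i)" for x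
    by (rule sum.mono_neutral_right) (use JK wgt0 in auto)
  have sumJ: "(\<Sum>i\<in>J. wgt i * x i) = (\<Sum>i\<in>A. a i * (x i - x Istar))" for x
  proof -
    have "(\<Sum>i\<in>J. wgt i * x i) = - S * x Istar + (\<Sum>i\<in>A. wgt i * x i)"
      unfolding JA using finA by (simp add: wgt_def)
    also have "(\<Sum>i\<in>A. wgt i * x i) = (\<Sum>i\<in>A. a i * x i)"
      by (rule sum.cong) (use finA in \<open>auto simp: wgt_def\<close>)
    finally show ?thesis unfolding S_def by (simp add: sum_distrib_right right_diff_distrib sum_subtractf)
  qed
  have mean: "(\<Sum>p\<in>?I. cc p * \<theta> (snd p)) = - s0 * (S^2 + Q)"
  proof -
    have "(\<Sum>p\<in>?I. cc p * \<theta> (snd p)) = s0 * (\<Sum>s<length h. d s * \<theta> (h ! s))" using L1[of "\<lambda>p. \<theta> (snd p)"] by simp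
    also have "(\<Sum>s<length h. d s * \<theta> (h ! s)) = (\<Sum>i\<in>{1..K}. real (cnt h i) * (wgt i / real (cnt h i) * \<theta> i))"
      using grp[of "\<lambda>i. wgt i / real (cnt h i) * \<theta> i"] unfolding d_def by simp
    also have "\<dots> = (\<Sum>i\<in>{1..K}. wgt i * \<theta> i)"
      by (intro sum.cong refl) (metis cw mult.assoc)
    also have "\<dots> = (\<Sum>i\<in>A. a i * (\<theta> i - \<theta> Istar))" using toJ sumJ by simp
    also have "\<dots> = - (\<Sum>i\<in>A. a i * ((\<theta> Istar - c0) + (c0 - \<theta> i)))"
      by (simp add: sum_negf[symmetric] algebra_simps)
    also have "\<dots> = - (S * S + Q)"
      unfolding distrib_left sum.distrib aa S_eq[symmetric] Q_def by (simp add: S_def sum_distrib_right)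
    finally show ?thesis by (simp add: power2_eq_square algebra_simps)
  qed
  have var: "(\<Sum>p\<in>?I. (cc p)^2) \<le> s0^2 * (S^2 + Q) / m"
  proof -
    have ccphi: "cc (Suc s, h ! s) = s0 * d s" if "s < length h" for s using that by (simp add: cc_def)
    have "(\<Sum>p\<in>?I. (cc p)^2) = (\<Sum>p\<in>?I. cc p * cc p)" by (simp add: power2_eq_square)
    also have "\<dots> = s0 * (\<Sum>s<length h. d s * cc (Suc s, h ! s))" by (rule L1)
    also have "(\<Sum>s<length h. d s * cc (Suc s, h ! s)) = s0 * (\<Sum>s<length h. (d s)^2)"
      by (simp add: ccphi sum_distrib_left power2_eq_square algebra_simps)
    also have "(\<Sum>s<length h. (d s)^2) = (\<Sum>i\<in>{1..K}. real (cnt h i) * (wgt i / real (cnt h i))^2)"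
      using grp[of "\<lambda>i. (wgt i / real (cnt h i))^2"] unfolding d_def by simp
    also have "\<dots> = (\<Sum>i\<in>{1..K}. wgt i * (wgt i / real (cnt h i)))"
      by (intro sum.cong refl) (metis cw power2_eq_square mult.assoc)
    also have "\<dots> = (\<Sum>i\<in>J. wgt i * (wgt i / real (cnt h i)))" by (rule toJ)
    also have "\<dots> \<le> (\<Sum>i\<in>J. (wgt i)^2 / m)"
    proof (rule sum_mono)
      fix i assume i: "i \<in> J"
      have "(wgt i)^2 / real (cnt h i) \<le> (wgt i)^2 / m"
        by (rule divide_left_mono) (use cntJ i m in auto)
      then show "wgt i * (wgt i / real (cnt h i)) \<le> (wgt i)^2 / m" by (simp add: power2_eq_square)
    qed
    also have "(\<Sum>i\<in>J. (wgt i)^2 / m) = (S^2 + Q) / m"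
    proof -
      have "(\<Sum>i\<in>J. (wgt i)^2) = S^2 + (\<Sum>i\<in>A. (wgt i)^2)" unfolding JA using finA by (simp add: wgt_def)
      also have "(\<Sum>i\<in>A. (wgt i)^2) = Q" unfolding Q_def by (rule sum.cong) (auto simp: wgt_def finA)
      finally show ?thesis by (simp add: sum_divide_distrib[symmetric])
    qed
    finally show ?thesis using s0 by (simp add: power2_eq_square mult_left_mono)
  qed
  have G: "GJ \<sigma>2 \<theta> Istar J \<le> (S^2 + Q) / (2 * \<sigma>2)"
  proof -
    define lam where "lam x = (if x = Istar then c0 else max c0 (\<theta> x))" for x
    have feas: "lam Istar \<le> Min (lam ` J)"
    proof -
      have "\<forall>x\<in>lam ` J. c0 \<le> x" unfolding lam_def by auto
      then have "c0 \<le> Min (lam ` J)" using finJ IJ by (subst Min_ge_iff) auto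
      then show ?thesis unfolding lam_def by simp
    qed
    have val: "(\<Sum>i\<in>J. (lam i - \<theta> i)^2 / (2 * \<sigma>2)) = (S^2 + Q) / (2 * \<sigma>2)"
    proof -
      have "(\<Sum>i\<in>J. (lam i - \<theta> i)^2) = (c0 - \<theta> Istar)^2 + (\<Sum>i\<in>A. (lam i - \<theta> i)^2)"
        unfolding JA using finA by (simp add: lam_def)
      also have "(\<Sum>i\<in>A. (lam i - \<theta> i)^2) = Q" unfolding Q_def
        by (rule sum.cong) (use finA in \<open>auto simp: lam_def a_def max_def\<close>)
      also have "(c0 - \<theta> Istar)^2 = S^2" using S_eq by (simp add: power2_commute)
      finally show ?thesis by (simp add: sum_divide_distrib[symmetric])
    qed
    have bdd: "bdd_below ((\<lambda>lam. \<Sum>i\<in>J. (lam i - \<theta> i)^2 / (2 * \<sigma>2)) ` {lam :: nat \<Rightarrow> real. lam Istar \<le> Min (lam ` J)})"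
      by (rule bdd_belowI[of _ 0]) (use s2 in \<open>auto intro!: sum_nonneg\<close>)
    show ?thesis unfolding GJ_def using cInf_lower[OF _ bdd, of "(S^2 + Q) / (2 * \<sigma>2)"] feas val by force
  qed
  show ?thesis
  proof (intro exI conjI allI impI)
    fix Y assume ev: "\<forall>i\<in>J. emp_mean Y h Istar \<le> emp_mean Y h i"
    have L2: "(\<Sum>s<length h. d s * Y (Suc s, h ! s)) = (\<Sum>i\<in>J. wgt i * emp_mean Y h i)"
    proof -
      have "(\<Sum>i\<in>J. wgt i * emp_mean Y h i) = (\<Sum>i\<in>J. \<Sum>s<length h. if h ! s = i then d s * Y (Suc s, h ! s) else 0)"
      proof (rule sum.cong[OF refl])
        fix i assume i: "i \<in> J"
        have set: "{s. s < length h \<and> h ! s = i} = {s\<in>{..<length h}. h ! s = i}" by auto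
        have "wgt i * emp_mean Y h i = (\<Sum>s\<in>{s\<in>{..<length h}. h ! s = i}. Y (Suc s, i)) * (wgt i / real (cnt h i))"
          unfolding emp_mean_def set using cntpos[OF i] by simp
        also have "\<dots> = (\<Sum>s\<in>{s\<in>{..<length h}. h ! s = i}. Y (Suc s, i) * (wgt i / real (cnt h i)))"
          by (rule sum_distrib_right)
        also have "\<dots> = (\<Sum>s\<in>{s\<in>{..<length h}. h ! s = i}. d s * Y (Suc s, h ! s))"
          by (rule sum.cong) (auto simp: d_def)
        also have "\<dots> = (\<Sum>s<length h. if h ! s = i then d s * Y (Suc s, h ! s) else 0)"
          by (rule sum.inter_filter) simp
        finally show "wgt i * emp_mean Y h i = (\<Sum>s<length h. if h ! s = i then d s * Y (Suc s, h ! s) else 0)" .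
      qed
      also have "\<dots> = (\<Sum>s<length h. \<Sum>i\<in>J. if h ! s = i then d s * Y (Suc s, h ! s) else 0)"
        by (rule sum.swap)
      also have "\<dots> = (\<Sum>s<length h. d s * Y (Suc s, h ! s))"
      proof (rule sum.cong[OF refl])
        fix s
        show "(\<Sum>i\<in>J. if h ! s = i then d s * Y (Suc s, h ! s) else 0) = d s * Y (Suc s, h ! s)"
          using finJ wgt0[of "h ! s"] by (simp add: d_def)
      qed
      finally show ?thesis by simp
    qed
    have "(\<Sum>i\<in>J. wgt i * emp_mean Y h i) \<ge> 0"
      unfolding sumJ using ev finA a_nn by (intro sum_nonneg) (auto simp: JA)
    then show "(\<Sum>p\<in>?I. cc p * Y p) \<ge> 0" using L1[of Y] L2 s0 by simp
  next
    have "(\<Sum>p\<in>?I. cc p * \<theta> (snd p) + (cc p)^2 * \<sigma>2 / 2)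
        = (\<Sum>p\<in>?I. cc p * \<theta> (snd p)) + (\<Sum>p\<in>?I. (cc p)^2) * (\<sigma>2 / 2)"
      by (simp add: sum.distrib sum_distrib_right)
    also have "\<dots> \<le> - s0 * (S^2 + Q) + s0^2 * (S^2 + Q) / m * (\<sigma>2 / 2)"
    proof -
      have "(\<Sum>p\<in>?I. (cc p)^2) * (\<sigma>2 / 2) \<le> s0^2 * (S^2 + Q) / m * (\<sigma>2 / 2)"
        by (rule mult_right_mono[OF var]) (use s2 in simp)
      then show ?thesis unfolding mean by linarith
    qed
    also have "\<dots> = - m * ((S^2 + Q) / (2 * \<sigma>2))"
      unfolding s0_def using m s2 by (simp add: field_simps power2_eq_square)
    also have "\<dots> \<le> - m * GJ \<sigma>2 \<theta> Istar J" using mult_left_mono[OF G, of m] m by simp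
    finally show "(\<Sum>p\<in>?I. cc p * \<theta> (snd p) + (cc p)^2 * \<sigma>2 / 2) \<le> - m * GJ \<sigma>2 \<theta> Istar J" .
  qed
qed



definition F0 :: "nat \<Rightarrow> (nat \<Rightarrow> nat) set" where
  "F0 K = {f. \<forall>x. (x \<in> {2..K} \<longrightarrow> f x \<in> {0..K}) \<and> (x \<notin> {2..K} \<longrightarrow> f x = 0)}"

lemma outcome_prob: "\<sigma>2 > 0 \<Longrightarrow> prob_space (outcome_space K \<sigma>2 \<theta> T)"
  unfolding outcome_space_def
  by (rule prob_space_PiM) (auto intro!: prob_space_normal_density split: prod.splits)

lemma prob_bound:
  assumes K2: "K \<ge> 2" and s2: "\<sigma>2 > 0" and Ist: "Istar \<in> {1..K}"
    and beta: "\<forall>k\<in>{2..K}. \<beta> k \<ge> 0" and bsum: "(\<Sum>k=2..K. \<beta> k) = 1"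
    and tbv: "valid_tiebreak tb" and ebv: "valid_tiebreak eb" and n: "n \<in> {2..K}"
    and m: "0 < bae_w K \<beta> n * real T - 2 * real K"
  shows "bae_prob K \<sigma>2 \<theta> \<beta> tb eb Istar n T
     \<le> real (card (F0 K)) * exp (- (bae_w K \<beta> n * real T - 2 * real K) * Gamma K \<sigma>2 \<theta> Istar n)"
proof -
  interpret bae K \<beta> T tb using K2 beta bsum tbv by unfold_locales
  have bY: "baeY K \<beta> tb eb" by (intro baeY.intro bae_axioms baeY_axioms.intro ebv)
  let ?I = "{1..T}\<times>{1..K}"
  let ?M = "outcome_space K \<sigma>2 \<theta> T"
  let ?G = "Gamma K \<sigma>2 \<theta> Istar n"
  define mT where "mT = bae_w K \<beta> n * real T - 2 * real K"
  have mT: "mT > 0" using m unfolding mT_def .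
  define F where "F = {Lf. good Lf \<and> Istar \<in> Ck Lf n}"
  have FF0: "F \<subseteq> F0 K" unfolding F_def F0_def good_def by fastforce
  have finF0: "finite (F0 K)" unfolding F0_def by (rule finite_set_of_finite_funs) auto
  have finF: "finite F" using finite_subset[OF FF0 finF0] .
  define hh where "hh Lf = hdet K \<beta> T tb Lf (bae_time K \<beta> T n)" for Lf
  have Gle: "?G \<le> GJ \<sigma>2 \<theta> Istar (Ck Lf n)" if "Lf \<in> F" for Lf
  proof -
    have g: "good Lf" "Istar \<in> Ck Lf n" using that unfolding F_def by auto
    have eq: "?G = Min ((\<lambda>J. GJ \<sigma>2 \<theta> Istar J) ` {J. J \<subseteq> {1..K} \<and> card J = n \<and> Istar \<in> J})"
      unfolding Gamma_def GJ_def ..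
    have fin: "finite {J. J \<subseteq> {1..K} \<and> card J = n \<and> Istar \<in> J}"
      by (rule finite_subset[of _ "Pow {1..K}"]) auto
    have mem: "Ck Lf n \<in> {J. J \<subseteq> {1..K} \<and> card J = n \<and> Istar \<in> J}"
      using card_Ck[OF g(1)] n g(2) unfolding Ck_def by auto
    show ?thesis unfolding eq by (rule Min_le) (use fin mem in auto)
  qed
  have ex: "\<forall>Lf\<in>F. \<exists>c. (\<forall>Y. (\<forall>i\<in>Ck Lf n. emp_mean Y (hh Lf) Istar \<le> emp_mean Y (hh Lf) i) \<longrightarrow> (\<Sum>p\<in>?I. c p * Y p) \<ge> 0)
     \<and> (\<Sum>p\<in>?I. c p * \<theta> (snd p) + (c p)^2 * \<sigma>2 / 2) \<le> - mT * GJ \<sigma>2 \<theta> Istar (Ck Lf n)"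
  proof
    fix Lf assume Lf: "Lf \<in> F"
    have g: "good Lf" "Istar \<in> Ck Lf n" using Lf unfolding F_def by auto
    show "\<exists>c. (\<forall>Y. (\<forall>i\<in>Ck Lf n. emp_mean Y (hh Lf) Istar \<le> emp_mean Y (hh Lf) i) \<longrightarrow> (\<Sum>p\<in>?I. c p * Y p) \<ge> 0)
     \<and> (\<Sum>p\<in>?I. c p * \<theta> (snd p) + (c p)^2 * \<sigma>2 / 2) \<le> - mT * GJ \<sigma>2 \<theta> Istar (Ck Lf n)"
      unfolding hh_def
    proof (rule gauss_event_bound)
      show "\<sigma>2 > 0" by fact
      show "set (hdet K \<beta> T tb Lf (TT n)) \<subseteq> {1..K}" by (rule hdet_set)
      show "length (hdet K \<beta> T tb Lf (TT n)) \<le> T" using time_le_T n by simp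
      show "Ck Lf n \<subseteq> {1..K}" unfolding Ck_def by auto
      show "Istar \<in> Ck Lf n" by fact
      show "mT > 0" by fact
      show "\<forall>i\<in>Ck Lf n. mT \<le> real (cnt (hdet K \<beta> T tb Lf (TT n)) i)"
      proof
        fix i assume i: "i \<in> Ck Lf n"
        have "real (cnt (hdet K \<beta> T tb Lf (Tp n)) i) \<ge> V n" by (rule count_lower) (use g i n in auto)
        moreover have "Tp n = TT n" using n unfolding Tp_def by simp
        moreover have "V n \<ge> mT" unfolding mT_def by (rule V_lower) (use n in auto)
        ultimately show "mT \<le> real (cnt (hdet K \<beta> T tb Lf (TT n)) i)" by simp
      qed
    qed
  qed
  from bchoice[OF ex] obtain cf where cf: "\<forall>Lf\<in>F. (\<forall>Y. (\<forall>i\<in>Ck Lf n. emp_mean Y (hh Lf) Istar \<le> emp_mean Y (hh Lf) i) \<longrightarrow> (\<Sum>p\<in>?I. cf Lf p * Y p) \<ge> 0)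
     \<and> (\<Sum>p\<in>?I. cf Lf p * \<theta> (snd p) + (cf Lf p)^2 * \<sigma>2 / 2) \<le> - mT * GJ \<sigma>2 \<theta> Istar (Ck Lf n)"
    by blast
  define E where "E = {Y \<in> space ?M. bae_eliminated K \<beta> T tb eb Y n = Istar}"
  have "emeasure ?M E \<le> (\<Sum>Lf\<in>F. \<integral>\<^sup>+ Y. ennreal (exp (\<Sum>p\<in>?I. cf Lf p * Y p)) \<partial>?M)"
  proof (rule union_chernoff)
    show "finite F" by fact
    show "\<forall>Lf\<in>F. (\<lambda>Y. ennreal (exp (\<Sum>p\<in>?I. cf Lf p * Y p))) \<in> borel_measurable ?M"
      using outcome_meas by blast
    show "E \<subseteq> space ?M" unfolding E_def by auto
    show "\<forall>Y\<in>E. \<exists>Lf\<in>F. 1 \<le> ennreal (exp (\<Sum>p\<in>?I. cf Lf p * Y p))"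
    proof
      fix Y assume "Y \<in> E"
      then have ev: "bae_eliminated K \<beta> T tb eb Y n = Istar" unfolding E_def by auto
      obtain Lf where Lf: "good Lf" "Istar \<in> Ck Lf n"
        "\<forall>i\<in>Ck Lf n. emp_mean Y (hdet K \<beta> T tb Lf (TT n)) Istar \<le> emp_mean Y (hdet K \<beta> T tb Lf (TT n)) i"
        using baeY.event_char[OF bY n ev] by blast
      have LF: "Lf \<in> F" unfolding F_def using Lf by auto
      have "(\<Sum>p\<in>?I. cf Lf p * Y p) \<ge> 0" using cf LF Lf(3) unfolding hh_def by blast
      then have "1 \<le> exp (\<Sum>p\<in>?I. cf Lf p * Y p)" by simp
      then show "\<exists>Lf\<in>F. 1 \<le> ennreal (exp (\<Sum>p\<in>?I. cf Lf p * Y p))" using LF by (intro bexI[of _ Lf]) auto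
    qed
  qed
  also have "\<dots> = (\<Sum>Lf\<in>F. ennreal (exp (\<Sum>p\<in>?I. cf Lf p * \<theta> (snd p) + (cf Lf p)^2 * \<sigma>2 / 2)))"
    by (intro sum.cong refl outcome_mgf s2)
  also have "\<dots> \<le> (\<Sum>Lf\<in>F. ennreal (exp (- mT * ?G)))"
  proof (rule sum_mono)
    fix Lf assume Lf: "Lf \<in> F"
    have "- mT * GJ \<sigma>2 \<theta> Istar (Ck Lf n) \<le> - mT * ?G" using Gle[OF Lf] mT by (simp add: mult_left_mono)
    then have "(\<Sum>p\<in>?I. cf Lf p * \<theta> (snd p) + (cf Lf p)^2 * \<sigma>2 / 2) \<le> - mT * ?G" using cf Lf by fastforce
    then show "ennreal (exp (\<Sum>p\<in>?I. cf Lf p * \<theta> (snd p) + (cf Lf p)^2 * \<sigma>2 / 2)) \<le> ennreal (exp (- mT * ?G))"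
      by (intro ennreal_leI) simp
  qed
  also have "\<dots> = ennreal (real (card F) * exp (- mT * ?G))"
    by (simp add: ennreal_mult' ennreal_of_nat_eq_real_of_nat)
  finally have em: "emeasure ?M E \<le> ennreal (real (card F) * exp (- mT * ?G))" .
  have "measure ?M E = enn2real (emeasure ?M E)" by (simp add: measure_def)
  also have "\<dots> \<le> enn2real (ennreal (real (card F) * exp (- mT * ?G)))"
    by (rule enn2real_mono[OF em]) simp
  also have "\<dots> = real (card F) * exp (- mT * ?G)" by simp
  also have "\<dots> \<le> real (card (F0 K)) * exp (- mT * ?G)"
    using card_mono[OF finF0 FF0] by (simp add: mult_right_mono)
  finally show ?thesis unfolding bae_prob_def E_def mT_def .
qed


lemma neg_log_rate_nonneg: "0 \<le> P \<Longrightarrow> P \<le> 1 \<Longrightarrow> 0 \<le> neg_log_rate P T"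
proof -
  assume a: "0 \<le> P" "P \<le> 1"
  show ?thesis
  proof (cases "P = 0")
    case False
    then have "ln P \<le> 0" using a by simp
    then have "- ln P / real T \<ge> 0" by (simp add: divide_nonpos_nonneg)
    then show ?thesis unfolding neg_log_rate_def using False by simp
  qed (simp add: neg_log_rate_def)
qed

theorem lemma4:
  fixes K :: nat and \<sigma>2 :: real and \<theta> :: "nat \<Rightarrow> real" and Istar :: nat
    and \<beta> :: "nat \<Rightarrow> real" and tb eb :: "nat list \<Rightarrow> nat set \<Rightarrow> nat" and n :: nat
  assumes "K \<ge> 2" and "\<sigma>2 > 0"
    and "Istar \<in> {1..K}" and "\<forall>i\<in>{1..K}. i \<noteq> Istar \<longrightarrow> \<theta> i < \<theta> Istar"
    and "\<forall>k\<in>{2..K}. \<beta> k \<ge> 0" and "(\<Sum>k=2..K. \<beta> k) = 1"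
    and "valid_tiebreak tb" and "valid_tiebreak eb"
    and "n \<in> {2..K}"
  shows "Liminf sequentially (\<lambda>T. neg_log_rate (bae_prob K \<sigma>2 \<theta> \<beta> tb eb Istar n T) T)
           \<ge> ereal (bae_w K \<beta> n * Gamma K \<sigma>2 \<theta> Istar n)"
proof -
  let ?P = "\<lambda>T. bae_prob K \<sigma>2 \<theta> \<beta> tb eb Istar n T"
  let ?w = "bae_w K \<beta> n"
  let ?G = "Gamma K \<sigma>2 \<theta> Istar n"
  have P01: "0 \<le> ?P T \<and> ?P T \<le> 1" for T
  proof -
    interpret prob_space "outcome_space K \<sigma>2 \<theta> T" by (rule outcome_prob) fact
    show ?thesis unfolding bae_prob_def by simp
  qed
  have w0: "?w \<ge> 0" unfolding bae_w_def using assms(5,9) by (intro sum_nonneg) auto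
  show ?thesis
  proof (cases "?w = 0")
    case True
    have "ereal 0 \<le> Liminf sequentially (\<lambda>T. neg_log_rate (?P T) T)"
    proof (rule Liminf_bounded, intro always_eventually allI)
      fix T
      have "0 \<le> neg_log_rate (?P T) T" by (rule neg_log_rate_nonneg) (use P01[of T] in auto)
      then show "ereal 0 \<le> neg_log_rate (?P T) T" by (metis zero_ereal_def)
    qed
    then show ?thesis using True by simp
  next
    case False
    then have wpos: "?w > 0" using w0 by simp
    define N where "N = real (card (F0 K))"
    define C where "C = 2 * real K * ?G + ln N"
    obtain T0 :: nat where T0: "2 * real K / ?w < real T0" using reals_Archimedean2 by blast
    have ev: "\<forall>\<^sub>F T in sequentially. ereal (?w * ?G - C / real T) \<le> neg_log_rate (?P T) T"
    proof (rule eventually_sequentiallyI[of T0])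
      fix T assume T: "T0 \<le> T"
      have "2 * real K / ?w < real T" using T0 T by linarith
      then have mpos: "0 < ?w * real T - 2 * real K" using wpos by (simp add: field_simps)
      have Tpos: "real T > 0"
      proof -
        have "2 * real K / ?w \<ge> 0" using wpos by simp
        then show ?thesis using \<open>2 * real K / ?w < real T\<close> by linarith
      qed
      have bound: "?P T \<le> N * exp (- (?w * real T - 2 * real K) * ?G)"
        unfolding N_def by (rule prob_bound[OF assms(1,2,3,5,6,7,8,9) mpos])
      show "ereal (?w * ?G - C / real T) \<le> neg_log_rate (?P T) T"
      proof (cases "?P T = 0")
        case True then show ?thesis unfolding neg_log_rate_def by simp
      next
        case False
        then have Ppos: "?P T > 0" using P01[of T] by simp
        then have Npos: "N > 0" using bound by (smt (verit) exp_gt_zero mult_nonpos_nonneg)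
        have "ln (?P T) \<le> ln (N * exp (- (?w * real T - 2 * real K) * ?G))"
          using Ppos bound by simp
        also have "\<dots> = ln N - (?w * real T - 2 * real K) * ?G" using Npos by (simp add: ln_mult algebra_simps)
        finally have "- ln (?P T) \<ge> ?w * real T * ?G - C" unfolding C_def by (simp add: algebra_simps)
        then have "- ln (?P T) / real T \<ge> (?w * real T * ?G - C) / real T"
          using Tpos divide_right_mono[of "?w * real T * ?G - C" "- ln (?P T)" "real T"] by simp
        moreover have "(?w * real T * ?G - C) / real T = ?w * ?G - C / real T"
          using Tpos by (simp add: field_simps)
        ultimately show ?thesis unfolding neg_log_rate_def using False by simp
      qed
    qed
    have lim: "(\<lambda>T. ereal (?w * ?G - C / real T)) \<longlonglongrightarrow> ereal (?w * ?G)"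
    proof (intro tendsto_ereal)
      have "(\<lambda>T. C / real T) \<longlonglongrightarrow> 0" by (rule lim_const_over_n)
      then have "(\<lambda>T. ?w * ?G - C / real T) \<longlonglongrightarrow> ?w * ?G - 0" by (intro tendsto_diff tendsto_const)
      then show "(\<lambda>T. ?w * ?G - C / real T) \<longlonglongrightarrow> ?w * ?G" by simp
    qed
    have "ereal (?w * ?G) = Liminf sequentially (\<lambda>T. ereal (?w * ?G - C / real T))"
      by (rule lim_imp_Liminf[OF _ lim, symmetric]) simp
    also have "\<dots> \<le> Liminf sequentially (\<lambda>T. neg_log_rate (?P T) T)"
      by (rule Liminf_mono[OF ev])
    finally show ?thesis .
  qed
qed


end
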